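(* Let $\mathcal{A}$ be a Fréchet algebra and $\mathcal{U}$ a countably incomplete ultrafilter on an index set $I$. Then the ultrapower $(\mathcal{A})_{\mathcal{U}}$ is unital if and only if $\mathcal{A}$ is unital.
   Context: A Fréchet algebra $(\mathcal{A},(P_n))$ is a complete topological algebra whose topology is given by an increasing sequence of submultiplicative seminorms. For a countably incomplete ultrafilter $\mathcal{U}$ on $I$ (i.e. there are $U_1\supseteq U_2\supseteq\cdots$ in $\mathcal{U}$ with empty intersection), the ultrapower $(\mathcal{A})_{\mathcal{U}}$ is $\ell_\infty(I,\mathcal{A})/\mathcal{N}_{\mathcal{U}}$, where $\ell_\infty(I,\mathcal{A})=\{(x_i)\in\prod_I\mathcal{A}:\sup_iP_n(x_i)<\infty\ \forall n\}$ and $\mathcal{N}_{\mathcal{U}}=\{(x_i):\lim_{\mathcal{U}}P_n(x_i)=0\ \forall n\}$, with seminorms $Q'_n((x_i)_{\mathcal{U}})=\lim_{\mathcal{U}}P_n(x_i)$ and coordinatewise product; it is a Fréchet algebra. *)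

theory Defs
  imports "HOL-Analysis.Analysis"
begin

definition frechet_algebra :: "(nat \<Rightarrow> 'a::real_algebra \<Rightarrow> real) \<Rightarrow> bool" where
  "frechet_algebra P \<longleftrightarrow>
     (\<forall>n x y. P n (x + y) \<le> P n x + P n y) \<and>
     (\<forall>n c x. P n (c *\<^sub>R x) = \<bar>c\<bar> * P n x) \<and>
     (\<forall>n x y. P n (x * y) \<le> P n x * P n y) \<and>
     (\<forall>n x. P n x \<le> P (Suc n) x) \<and>
     (\<forall>x. (\<forall>n. P n x = 0) \<longrightarrow> x = 0) \<and>
     (\<forall>X :: nat \<Rightarrow> 'a.
        (\<forall>n. \<forall>e>0. \<exists>N. \<forall>m\<ge>N. \<forall>k\<ge>N. P n (X m - X k) < e) \<longrightarrow>
        (\<exists>L. \<forall>n. (\<lambda>m. P n (X m - L)) \<longlonglongrightarrow> 0))"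

definition algebra_unital :: "'a::real_algebra itself \<Rightarrow> bool" where
  "algebra_unital TYPE('a) \<longleftrightarrow> (\<exists>e::'a. \<forall>x. e * x = x \<and> x * e = x)"

definition is_ultrafilter :: "'i filter \<Rightarrow> bool" where
  "is_ultrafilter U \<longleftrightarrow> U \<noteq> bot \<and>
     (\<forall>A. eventually (\<lambda>i. i \<in> A) U \<or> eventually (\<lambda>i. i \<notin> A) U)"

definition countably_incomplete :: "'i filter \<Rightarrow> bool" where
  "countably_incomplete U \<longleftrightarrow>
     (\<exists>W :: nat \<Rightarrow> 'i set. (\<forall>n. eventually (\<lambda>i. i \<in> W n) U) \<and>
        (\<forall>n. W (Suc n) \<subseteq> W n) \<and> (\<Inter>n. W n) = {})"

text \<open>ell-infinity(I, A), with the index set I being the universe of type 'i.\<close>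
definition ell_inf :: "(nat \<Rightarrow> 'a::real_algebra \<Rightarrow> real) \<Rightarrow> ('i \<Rightarrow> 'a) set" where
  "ell_inf P = {x. \<forall>n. bdd_above (range (\<lambda>i. P n (x i)))}"

definition null_U :: "(nat \<Rightarrow> 'a::real_algebra \<Rightarrow> real) \<Rightarrow> 'i filter \<Rightarrow> ('i \<Rightarrow> 'a) set" where
  "null_U P U = {x \<in> ell_inf P. \<forall>n. ((\<lambda>i. P n (x i)) \<longlongrightarrow> 0) U}"

definition ultra_rel :: "(nat \<Rightarrow> 'a::real_algebra \<Rightarrow> real) \<Rightarrow> 'i filter \<Rightarrow> (('i \<Rightarrow> 'a) \<times> ('i \<Rightarrow> 'a)) set" where
  "ultra_rel P U = {(x, y). x \<in> ell_inf P \<and> y \<in> ell_inf P \<and> (\<lambda>i. x i - y i) \<in> null_U P U}"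

definition ultrapower :: "(nat \<Rightarrow> 'a::real_algebra \<Rightarrow> real) \<Rightarrow> 'i filter \<Rightarrow> ('i \<Rightarrow> 'a) set set" where
  "ultrapower P U = ell_inf P // ultra_rel P U"

definition ultra_mult :: "(nat \<Rightarrow> 'a::real_algebra \<Rightarrow> real) \<Rightarrow> 'i filter \<Rightarrow>
     ('i \<Rightarrow> 'a) set \<Rightarrow> ('i \<Rightarrow> 'a) set \<Rightarrow> ('i \<Rightarrow> 'a) set" where
  "ultra_mult P U X Y = ultra_rel P U `` {(\<lambda>i. x i * y i) | x y. x \<in> X \<and> y \<in> Y}"

definition ultrapower_unital :: "(nat \<Rightarrow> 'a::real_algebra \<Rightarrow> real) \<Rightarrow> 'i filter \<Rightarrow> bool" where
  "ultrapower_unital P U \<longleftrightarrow>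
     (\<exists>E \<in> ultrapower P U. \<forall>X \<in> ultrapower P U.
        ultra_mult P U E X = X \<and> ultra_mult P U X E = X)"

end

theory Submission imports Defs begin

lemma fa_unf: "frechet_algebra (P :: nat \<Rightarrow> 'a::real_algebra \<Rightarrow> real) \<Longrightarrow>
     (\<forall>n x y. P n (x + y) \<le> P n x + P n y) \<and>
     (\<forall>n c x. P n (c *\<^sub>R x) = \<bar>c\<bar> * P n x) \<and>
     (\<forall>n x y. P n (x * y) \<le> P n x * P n y) \<and>
     (\<forall>n x. P n x \<le> P (Suc n) x) \<and>
     (\<forall>x. (\<forall>n. P n x = 0) \<longrightarrow> x = 0) \<and>
     (\<forall>X :: nat \<Rightarrow> 'a.
        (\<forall>n. \<forall>e>0. \<exists>N. \<forall>m\<ge>N. \<forall>k\<ge>N. P n (X m - X k) < e) \<longrightarrow>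
        (\<exists>L. \<forall>n. (\<lambda>m. P n (X m - L)) \<longlonglongrightarrow> 0))"
  unfolding frechet_algebra_def by assumption

lemma fa_tri: assumes a: "frechet_algebra P" shows "P n (x + y) \<le> P n x + P n y"
  using conjunct1[OF fa_unf[OF a]] by simp
lemma fa_scale: assumes a: "frechet_algebra P" shows "P n (c *\<^sub>R x) = \<bar>c\<bar> * P n x"
  using conjunct1[OF conjunct2[OF fa_unf[OF a]]] by simp
lemma fa_mult: assumes a: "frechet_algebra P" shows "P n (x * y) \<le> P n x * P n y"
  using conjunct1[OF conjunct2[OF conjunct2[OF fa_unf[OF a]]]] by simp
lemma fa_suc: assumes a: "frechet_algebra P" shows "P n x \<le> P (Suc n) x"
  using conjunct1[OF conjunct2[OF conjunct2[OF conjunct2[OF fa_unf[OF a]]]]] by simp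
lemma fa_sep: assumes a: "frechet_algebra P" and h: "\<And>n. P n x = 0" shows "x = 0"
  using conjunct1[OF conjunct2[OF conjunct2[OF conjunct2[OF conjunct2[OF fa_unf[OF a]]]]]] by (simp add: h)

lemma fa_complete: "frechet_algebra P \<Longrightarrow>
   (\<And>n e. e > 0 \<Longrightarrow> \<exists>N. \<forall>m\<ge>N. \<forall>k\<ge>N. P n (X m - X k) < e) \<Longrightarrow>
   \<exists>L. \<forall>n. (\<lambda>m. P n (X m - L)) \<longlonglongrightarrow> 0"
proof -
  assume a: "frechet_algebra P" and c: "\<And>n e. e > 0 \<Longrightarrow> \<exists>N. \<forall>m\<ge>N. \<forall>k\<ge>N. P n (X m - X k) < e"
  have h: "\<forall>X :: nat \<Rightarrow> 'a.
        (\<forall>n. \<forall>e>0. \<exists>N. \<forall>m\<ge>N. \<forall>k\<ge>N. P n (X m - X k) < e) \<longrightarrow>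
        (\<exists>L. \<forall>n. (\<lambda>m. P n (X m - L)) \<longlonglongrightarrow> 0)"
    using conjunct2[OF conjunct2[OF conjunct2[OF conjunct2[OF conjunct2[OF fa_unf[OF a]]]]]] .
  have "\<forall>n. \<forall>e>0. \<exists>N. \<forall>m\<ge>N. \<forall>k\<ge>N. P n (X m - X k) < e" using c by blast
  thus ?thesis using spec[OF h, of X] by (rule rev_mp)
qed

lemma fa_zero: "frechet_algebra P \<Longrightarrow> P n 0 = 0"
  using fa_scale[of P n 0 0] by simp

lemma fa_neg: "frechet_algebra P \<Longrightarrow> P n (- x) = P n x"
  using fa_scale[of P n "-1" x] by simp

lemma fa_nonneg: "frechet_algebra P \<Longrightarrow> 0 \<le> P n x"
proof -
  assume a: "frechet_algebra P"
  have "P n (x + - x) \<le> P n x + P n (-x)" by (rule fa_tri[OF a])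
  thus ?thesis using fa_zero[OF a] fa_neg[OF a] by simp
qed

lemma fa_diff_sym: "frechet_algebra P \<Longrightarrow> P n (x - y) = P n (y - x)"
  using fa_neg[of P n "x - y"] by simp

lemma fa_diff_tri: "frechet_algebra P \<Longrightarrow> P n (x - z) \<le> P n (x - y) + P n (y - z)"
  using fa_tri[of P n "x - y" "y - z"] by simp

lemma fa_mono: "frechet_algebra P \<Longrightarrow> n \<le> m \<Longrightarrow> P n x \<le> P m x"
  using lift_Suc_mono_le[of "\<lambda>k. P k x" n m] fa_suc by blast

lemma tendsto0_iff: "((f::'i \<Rightarrow> real) \<longlongrightarrow> 0) F \<longleftrightarrow> (\<forall>e>0. eventually (\<lambda>i. \<bar>f i\<bar> < e) F)"
  by (simp add: tendsto_iff dist_real_def)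

lemma ell_infD: "x \<in> ell_inf P \<Longrightarrow> \<exists>B. \<forall>i. P n (x i) \<le> B"
  unfolding ell_inf_def bdd_above_def by auto

lemma ell_infI: "(\<And>n. \<exists>B. \<forall>i. P n (x i) \<le> B) \<Longrightarrow> x \<in> ell_inf P"
  unfolding ell_inf_def bdd_above_def by fastforce

lemma ell_inf_diff: "frechet_algebra P \<Longrightarrow> x \<in> ell_inf P \<Longrightarrow> y \<in> ell_inf P \<Longrightarrow> (\<lambda>i. x i - y i) \<in> ell_inf P"
proof (rule ell_infI)
  fix n assume a: "frechet_algebra P" "x \<in> ell_inf P" "y \<in> ell_inf P"
  obtain A B where "\<forall>i. P n (x i) \<le> A" "\<forall>i. P n (y i) \<le> B" using a ell_infD by metis
  moreover have "P n (x i - y i) \<le> P n (x i) + P n (y i)" for i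
    using fa_tri[OF a(1), of n "x i" "- y i"] fa_neg[OF a(1)] by simp
  ultimately have "\<forall>i. P n (x i - y i) \<le> A + B" by (meson add_mono order_trans)
  thus "\<exists>B. \<forall>i. P n (x i - y i) \<le> B" by blast
qed

lemma ell_inf_mult: "frechet_algebra P \<Longrightarrow> x \<in> ell_inf P \<Longrightarrow> y \<in> ell_inf P \<Longrightarrow> (\<lambda>i. x i * y i) \<in> ell_inf P"
proof (rule ell_infI)
  fix n assume a: "frechet_algebra P" "x \<in> ell_inf P" "y \<in> ell_inf P"
  obtain A B where AB: "\<forall>i. P n (x i) \<le> A" "\<forall>i. P n (y i) \<le> B" using a ell_infD by metis
  have "P n (x i * y i) \<le> A * B" for i
  proof -
    have "P n (x i * y i) \<le> P n (x i) * P n (y i)" by (rule fa_mult[OF a(1)])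
    also have "\<dots> \<le> A * B" using AB fa_nonneg[OF a(1)]
      by (meson mult_mono order_trans)
    finally show ?thesis .
  qed
  thus "\<exists>B. \<forall>i. P n (x i * y i) \<le> B" by blast
qed

lemma const_ell_inf: "(\<lambda>i. c) \<in> ell_inf P"
  by (rule ell_infI) auto

lemma rel_iff:
  assumes "frechet_algebra P"
  shows "(x, y) \<in> ultra_rel P U \<longleftrightarrow> x \<in> ell_inf P \<and> y \<in> ell_inf P \<and>
     (\<forall>n e. e > 0 \<longrightarrow> eventually (\<lambda>i. P n (x i - y i) < e) U)"
  using ell_inf_diff[OF assms, of x y] fa_nonneg[OF assms]
  unfolding ultra_rel_def null_U_def tendsto0_iff by auto

lemma rel_equiv: assumes a: "frechet_algebra P" shows "equiv (ell_inf P) (ultra_rel P U)"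
proof (rule equivI)
  show "ultra_rel P U \<subseteq> ell_inf P \<times> ell_inf P" using rel_iff[OF a] by auto
  show "refl_on (ell_inf P) (ultra_rel P U)"
    by (rule refl_onI) (simp add: rel_iff[OF a] fa_zero[OF a])
  show "sym (ultra_rel P U)"
  proof (rule symI)
    fix x y assume xy: "(x, y) \<in> ultra_rel P U"
    have "eventually (\<lambda>i. P n (y i - x i) < e) U" if "e > 0" for n e
    proof -
      have "eventually (\<lambda>i. P n (x i - y i) < e) U" using xy that rel_iff[OF a] by blast
      thus ?thesis
      proof (rule eventually_mono)
        fix i assume "P n (x i - y i) < e"
        thus "P n (y i - x i) < e" using fa_diff_sym[OF a, of n "x i" "y i"] by linarith
      qed
    qed
    thus "(y, x) \<in> ultra_rel P U" using xy rel_iff[OF a] by blast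
  qed
  show "trans (ultra_rel P U)"
  proof (rule transI)
    fix x y z assume xy: "(x, y) \<in> ultra_rel P U" and yz: "(y, z) \<in> ultra_rel P U"
    have "eventually (\<lambda>i. P n (x i - z i) < e) U" if "e > 0" for n e
    proof -
      have "eventually (\<lambda>i. P n (x i - y i) < e/2 \<and> P n (y i - z i) < e/2) U"
      proof (rule eventually_conj)
        have hx: "\<forall>n e. 0 < e \<longrightarrow> eventually (\<lambda>i. P n (x i - y i) < e) U" using xy rel_iff[OF a] by blast
        have hy: "\<forall>n e. 0 < e \<longrightarrow> eventually (\<lambda>i. P n (y i - z i) < e) U" using yz rel_iff[OF a] by blast
        show "eventually (\<lambda>i. P n (x i - y i) < e/2) U" by (rule hx[rule_format]) (use that in simp)
        show "eventually (\<lambda>i. P n (y i - z i) < e/2) U" by (rule hy[rule_format]) (use that in simp)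
      qed
      thus ?thesis
      proof (rule eventually_mono)
        fix i assume "P n (x i - y i) < e/2 \<and> P n (y i - z i) < e/2"
        thus "P n (x i - z i) < e" using fa_diff_tri[OF a, of n "x i" "z i" "y i"] by linarith
      qed
    qed
    thus "(x, z) \<in> ultra_rel P U" using xy yz by (simp add: rel_iff[OF a])
  qed
qed

lemma small_mult:
  assumes a: "frechet_algebra P" and z: "z \<in> ell_inf P"
    and d: "\<And>n e. e > 0 \<Longrightarrow> eventually (\<lambda>i. P n (d i) < e) U"
    and e: "e > 0"
  shows "eventually (\<lambda>i. P n (d i * z i) < e \<and> P n (z i * d i) < e) U"
proof -
  obtain B where B: "\<forall>i. P n (z i) \<le> B" using ell_infD[OF z] by blast
  define C where "C = max B 1"
  have C: "C > 0" "\<forall>i. P n (z i) \<le> C"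
    using B unfolding C_def by (auto intro: max.coboundedI1)
  have "eventually (\<lambda>i. P n (d i) < e / C) U" by (rule d) (use C e in simp)
  thus ?thesis
  proof (rule eventually_mono)
    fix i assume h: "P n (d i) < e / C"
    have "P n (d i) * P n (z i) \<le> P n (d i) * C"
      using C fa_nonneg[OF a] by (simp add: mult_left_mono)
    also have "\<dots> < e / C * C" by (rule mult_strict_right_mono[OF h C(1)])
    also have "\<dots> = e" using C by simp
    finally have *: "P n (d i) * P n (z i) < e" .
    show "P n (d i * z i) < e \<and> P n (z i * d i) < e"
      using * fa_mult[OF a, of n "d i" "z i"] fa_mult[OF a, of n "z i" "d i"]
      by (simp add: mult.commute)
  qed
qed

lemma class_image:
  assumes eq: "equiv A r" and S: "S \<subseteq> r``{y}" and s: "s \<in> S"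
  shows "r``S = r``{y}"
proof
  show "r``S \<subseteq> r``{y}"
  proof
    fix w assume "w \<in> r``S"
    then obtain t where t: "t \<in> S" "(t, w) \<in> r" by blast
    have "(y, t) \<in> r" using S t by blast
    hence "(y, w) \<in> r" using t eq unfolding equiv_def by (meson transD)
    thus "w \<in> r``{y}" by blast
  qed
  show "r``{y} \<subseteq> r``S"
  proof
    fix w assume "w \<in> r``{y}"
    hence yw: "(y, w) \<in> r" by blast
    have "(y, s) \<in> r" using S s by blast
    hence "(s, y) \<in> r" using eq unfolding equiv_def by (meson symD)
    hence "(s, w) \<in> r" using yw eq unfolding equiv_def by (meson transD)
    thus "w \<in> r``S" using s by blast
  qed
qed

lemma relD: assumes a: "frechet_algebra P" and r: "(x, y) \<in> ultra_rel P U" and e: "e > 0"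
  shows "eventually (\<lambda>i. P n (x i - y i) < e) U"
  using r e unfolding rel_iff[OF a] by blast

lemma relE: assumes a: "frechet_algebra P" and r: "(x, y) \<in> ultra_rel P U"
  shows "x \<in> ell_inf P" "y \<in> ell_inf P"
  using r unfolding rel_iff[OF a] by blast+

lemma relI: assumes a: "frechet_algebra P" and "x \<in> ell_inf P" "y \<in> ell_inf P"
    and h: "\<And>n e. e > 0 \<Longrightarrow> eventually (\<lambda>i. P n (x i - y i) < e) U"
  shows "(x, y) \<in> ultra_rel P U"
  unfolding rel_iff[OF a] using assms by blast


lemma prod_in_class:
  assumes a: "frechet_algebra P" and unit: "\<forall>x. e * x = x \<and> x * e = x"
    and yz: "(y, z) \<in> ultra_rel P U" and cx: "((\<lambda>i. e), x) \<in> ultra_rel P U"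
  shows "(y, \<lambda>i. x i * z i) \<in> ultra_rel P U \<and> (y, \<lambda>i. z i * x i) \<in> ultra_rel P U"
proof -
  have z: "z \<in> ell_inf P" and x: "x \<in> ell_inf P" and y: "y \<in> ell_inf P"
    using relE[OF a yz] relE[OF a cx] by auto
  have d: "eventually (\<lambda>i. P n (e - x i) < ep) U" if "ep > 0" for n ep
    using relD[OF a cx that] by simp
  have ev: "eventually (\<lambda>i. P n (y i - x i * z i) < ep \<and> P n (y i - z i * x i) < ep) U"
    if ep: "ep > 0" for n ep
  proof -
    have "eventually (\<lambda>i. P n (y i - z i) < ep/2) U" using relD[OF a yz, of "ep/2"] ep by simp
    moreover have "eventually (\<lambda>i. P n ((e - x i) * z i) < ep/2 \<and> P n (z i * (e - x i)) < ep/2) U"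
      by (rule small_mult[OF a z d half_gt_zero[OF ep]])
    ultimately show ?thesis
    proof (rule eventually_elim2)
      fix i assume h1: "P n (y i - z i) < ep/2"
        and h2: "P n ((e - x i) * z i) < ep/2 \<and> P n (z i * (e - x i)) < ep/2"
      have e1: "y i - x i * z i = (y i - z i) + (e - x i) * z i"
        using unit by (simp add: algebra_simps)
      have e2: "y i - z i * x i = (y i - z i) + z i * (e - x i)"
        using unit by (simp add: algebra_simps)
      show "P n (y i - x i * z i) < ep \<and> P n (y i - z i * x i) < ep"
        unfolding e1 e2 using h1 h2 fa_tri[OF a, of n "y i - z i" "(e - x i) * z i"]
          fa_tri[OF a, of n "y i - z i" "z i * (e - x i)"] by linarith
    qed
  qed
  show ?thesis
  proof
    show "(y, \<lambda>i. x i * z i) \<in> ultra_rel P U"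
      by (rule relI[OF a y ell_inf_mult[OF a x z]]) (rule eventually_mono[OF ev], assumption, blast)
    show "(y, \<lambda>i. z i * x i) \<in> ultra_rel P U"
      by (rule relI[OF a y ell_inf_mult[OF a z x]]) (rule eventually_mono[OF ev], assumption, blast)
  qed
qed

lemma unital_imp:
  fixes P :: "nat \<Rightarrow> 'a::real_algebra \<Rightarrow> real" and U :: "'i filter" and e :: 'a
  assumes a: "frechet_algebra P" and unit: "\<forall>x. e * x = x \<and> x * e = x"
  shows "ultrapower_unital P U"
proof -
  let ?r = "ultra_rel P U"
  define c where "c = (\<lambda>i::'i. e)"
  have eq: "equiv (ell_inf P) ?r" by (rule rel_equiv[OF a])
  have c: "c \<in> ell_inf P" unfolding c_def by (rule const_ell_inf)
  define E where "E = ?r``{c}"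
  have E: "E \<in> ultrapower P U" unfolding E_def ultrapower_def by (rule quotientI[OF c])
  have cE: "c \<in> E" unfolding E_def by (rule equiv_class_self[OF eq c])
  have "ultra_mult P U E X = X \<and> ultra_mult P U X E = X" if X: "X \<in> ultrapower P U" for X
  proof -
    obtain y where Xy: "X = ?r``{y}" and y: "y \<in> ell_inf P"
      using X unfolding ultrapower_def by (rule quotientE)
    have yX: "y \<in> X" using Xy equiv_class_self[OF eq y] by simp
    have cx: "(c, x) \<in> ?r" if "x \<in> E" for x using that unfolding E_def by blast
    have yz: "(y, z) \<in> ?r" if "z \<in> X" for z using that Xy by blast
    have S1: "{(\<lambda>i. x i * z i) | x z. x \<in> E \<and> z \<in> X} \<subseteq> ?r``{y}"
    proof
      fix w assume "w \<in> {(\<lambda>i. x i * z i) | x z. x \<in> E \<and> z \<in> X}"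
      then obtain x z where w: "w = (\<lambda>i. x i * z i)" and xz: "x \<in> E" "z \<in> X" by blast
      have "(y, w) \<in> ?r"
        using prod_in_class[OF a unit yz[OF xz(2)] cx[OF xz(1), unfolded c_def]] w by simp
      thus "w \<in> ?r``{y}" by blast
    qed
    have S2: "{(\<lambda>i. x i * z i) | x z. x \<in> X \<and> z \<in> E} \<subseteq> ?r``{y}"
    proof
      fix w assume "w \<in> {(\<lambda>i. x i * z i) | x z. x \<in> X \<and> z \<in> E}"
      then obtain x z where w: "w = (\<lambda>i. x i * z i)" and xz: "x \<in> X" "z \<in> E" by blast
      have "(y, w) \<in> ?r"
        using prod_in_class[OF a unit yz[OF xz(1)] cx[OF xz(2), unfolded c_def]] w by simp
      thus "w \<in> ?r``{y}" by blast
    qed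
    have m1: "ultra_mult P U E X = ?r``{y}" unfolding ultra_mult_def
      by (rule class_image[OF eq S1]) (use cE yX in blast)
    have m2: "ultra_mult P U X E = ?r``{y}" unfolding ultra_mult_def
      by (rule class_image[OF eq S2]) (use cE yX in blast)
    show ?thesis using m1 m2 Xy by simp
  qed
  thus ?thesis unfolding ultrapower_unital_def using E by blast
qed


lemma unit_props:
  assumes a: "frechet_algebra P" and E: "E = ultra_rel P U `` {e}" and e: "e \<in> ell_inf P"
    and unitE: "\<forall>X\<in>ultrapower P U. ultra_mult P U E X = X \<and> ultra_mult P U X E = X"
    and y: "y \<in> ell_inf P"
  shows "(y, \<lambda>i. e i * y i) \<in> ultra_rel P U \<and> (y, \<lambda>i. y i * e i) \<in> ultra_rel P U"
proof -
  let ?r = "ultra_rel P U"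
  have eq: "equiv (ell_inf P) ?r" by (rule rel_equiv[OF a])
  define X where "X = ?r``{y}"
  have X: "X \<in> ultrapower P U" unfolding X_def ultrapower_def by (rule quotientI[OF y])
  have yX: "y \<in> X" unfolding X_def by (rule equiv_class_self[OF eq y])
  have eE: "e \<in> E" unfolding E by (rule equiv_class_self[OF eq e])
  have ey: "(\<lambda>i. e i * y i) \<in> ell_inf P" "(\<lambda>i. y i * e i) \<in> ell_inf P"
    using ell_inf_mult[OF a e y] ell_inf_mult[OF a y e] by auto
  have r1: "((\<lambda>i. e i * y i), (\<lambda>i. e i * y i)) \<in> ?r" "((\<lambda>i. y i * e i), (\<lambda>i. y i * e i)) \<in> ?r"
    using ey eq unfolding equiv_def refl_on_def by auto
  have "(\<lambda>i. e i * y i) \<in> ultra_mult P U E X"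
    unfolding ultra_mult_def using r1(1) eE yX by blast
  hence 1: "(\<lambda>i. e i * y i) \<in> X" using unitE X by simp
  have "(\<lambda>i. y i * e i) \<in> ultra_mult P U X E"
    unfolding ultra_mult_def using r1(2) eE yX by blast
  hence 2: "(\<lambda>i. y i * e i) \<in> X" using unitE X by simp
  show ?thesis using 1 2 unfolding X_def by blast
qed

definition goodset :: "(nat \<Rightarrow> 'a::real_algebra \<Rightarrow> real) \<Rightarrow> ('i \<Rightarrow> 'a) \<Rightarrow> nat \<Rightarrow> real \<Rightarrow> 'i \<Rightarrow> bool" where
  "goodset P e m d i \<longleftrightarrow> (\<forall>j. P m (e i * e j - e j) < d \<and> P m (e j * e i - e j) < d)"

lemma good_ev:
  fixes P :: "nat \<Rightarrow> 'a::real_algebra \<Rightarrow> real" and U :: "'i filter" and e :: "'i \<Rightarrow> 'a"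
  assumes a: "frechet_algebra P" and e: "e \<in> ell_inf P"
    and ax: "\<forall>y\<in>ell_inf P. (y, \<lambda>i. e i * y i) \<in> ultra_rel P U \<and> (y, \<lambda>i. y i * e i) \<in> ultra_rel P U"
    and d: "d > 0"
  shows "eventually (goodset P e m d) U"
proof -
  have rng: "(\<lambda>i. e (J i)) \<in> ell_inf P" for J :: "'i \<Rightarrow> 'i"
  proof (rule ell_infI)
    fix n obtain B where "\<forall>i. P n (e i) \<le> B" using ell_infD[OF e] by blast
    thus "\<exists>B. \<forall>i. P n (e (J i)) \<le> B" by blast
  qed
  define J where "J i = (SOME j. \<not> P m (e i * e j - e j) < d)" for i
  define K where "K i = (SOME j. \<not> P m (e j * e i - e j) < d)" for i
  have "eventually (\<lambda>i. P m (e (J i) - e i * e (J i)) < d) U"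
    using relD[OF a ax[rule_format, OF rng[of J], THEN conjunct1] d] by simp
  moreover have "eventually (\<lambda>i. P m (e (K i) - e (K i) * e i) < d) U"
    using relD[OF a ax[rule_format, OF rng[of K], THEN conjunct2] d] by simp
  ultimately show ?thesis
  proof (rule eventually_elim2)
    fix i assume h1: "P m (e (J i) - e i * e (J i)) < d" and h2: "P m (e (K i) - e (K i) * e i) < d"
    have g1: "P m (e i * e j - e j) < d" for j
    proof (rule ccontr)
      assume "\<not> P m (e i * e j - e j) < d"
      hence "\<not> P m (e i * e (J i) - e (J i)) < d" unfolding J_def by (rule someI)
      thus False using h1 fa_diff_sym[OF a] by metis
    qed
    have g2: "P m (e j * e i - e j) < d" for j
    proof (rule ccontr)
      assume "\<not> P m (e j * e i - e j) < d"
      hence "\<not> P m (e (K i) * e i - e (K i)) < d" unfolding K_def by (rule someI)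
      thus False using h2 fa_diff_sym[OF a] by metis
    qed
    show "goodset P e m d i" unfolding goodset_def using g1 g2 by blast
  qed
qed

lemma good_pair:
  assumes a: "frechet_algebra P" and "goodset P e m d i" "goodset P e m d j"
  shows "P m (e i - e j) < 2 * d"
proof -
  have 1: "P m (e j * e i - e i) < d" and 2: "P m (e j * e i - e j) < d"
    using assms unfolding goodset_def by blast+
  have "P m (e i - e j) \<le> P m (e i - e j * e i) + P m (e j * e i - e j)" by (rule fa_diff_tri[OF a])
  thus ?thesis using 1 2 fa_diff_sym[OF a, of m "e i" "e j * e i"] by linarith
qed

lemma good_mono:
  assumes a: "frechet_algebra P" and "N \<le> M" "d \<le> d'" "goodset P e M d i"
  shows "goodset P e N d' i"
  using assms fa_mono[OF a \<open>N \<le> M\<close>] unfolding goodset_def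
  by (meson le_less_trans less_le_trans)

lemma unit_from:
  fixes P :: "nat \<Rightarrow> 'a::real_algebra \<Rightarrow> real" and U :: "'i filter" and e :: "'i \<Rightarrow> 'a"
  assumes a: "frechet_algebra P" and nb: "U \<noteq> bot" and e: "e \<in> ell_inf P"
    and ax: "\<forall>y\<in>ell_inf P. (y, \<lambda>i. e i * y i) \<in> ultra_rel P U \<and> (y, \<lambda>i. y i * e i) \<in> ultra_rel P U"
  shows "\<exists>u::'a. \<forall>x. u * x = x \<and> x * u = x"
proof -
  define dl where "dl N = inverse (real (Suc N))" for N
  have dl_pos: "dl N > 0" for N by (simp add: dl_def)
  have dl_mono: "dl M \<le> dl N" if "N \<le> M" for N M
    using that by (simp add: dl_def le_imp_inverse_le)
  have evG: "eventually (goodset P e N (dl N)) U" for N by (rule good_ev[OF a e ax dl_pos])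
  define s where "s N = (SOME i. goodset P e N (dl N) i)" for N
  have sG: "goodset P e N (dl N) (s N)" for N
    using eventually_happens[OF evG[of N]] nb unfolding s_def by (metis someI_ex)
  have arch: "\<exists>N\<ge>n. 2 * dl N < ep" if ep: "ep > 0" for ep n
  proof -
    obtain N0 where "inverse (real (Suc N0)) < ep / 2" using reals_Archimedean[of "ep/2"] ep by auto
    hence "2 * dl N0 < ep" unfolding dl_def by simp
    moreover have "dl (max n N0) \<le> dl N0" by (rule dl_mono) simp
    ultimately have "2 * dl (max n N0) < ep" by linarith
    thus ?thesis by (intro exI[of _ "max n N0"]) simp
  qed
  have sm: "goodset P e N (dl N) (s m)" if "N \<le> m" for N m
    using good_mono[OF a that dl_mono[OF that] sG[of m]] .
  have cauchy: "\<exists>N. \<forall>m\<ge>N. \<forall>k\<ge>N. P n (e (s m) - e (s k)) < ep" if ep: "ep > 0" for n ep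
  proof -
    obtain N where N: "N \<ge> n" "2 * dl N < ep" using arch[OF ep] by blast
    have "P n (e (s m) - e (s k)) < ep" if "m \<ge> N" "k \<ge> N" for m k
    proof -
      have "P N (e (s m) - e (s k)) < 2 * dl N" using good_pair[OF a sm sm] that by blast
      thus ?thesis using fa_mono[OF a N(1)] N(2) by (meson le_less_trans less_trans)
    qed
    thus ?thesis by blast
  qed
  obtain L where L: "\<forall>n. (\<lambda>m. P n (e (s m) - L)) \<longlonglongrightarrow> 0"
    using fa_complete[OF a, of "\<lambda>m. e (s m)"] cauchy by blast
  have conv: "eventually (\<lambda>i. P n (e i - L) < ep) U" if ep: "ep > 0" for n ep
  proof -
    obtain N where N: "N \<ge> n" "2 * dl N < ep / 2" using arch[of "ep/2" n] ep by auto
    obtain m0 where m0: "\<forall>m\<ge>m0. norm (P n (e (s m) - L) - 0) < ep / 2"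
      using L ep unfolding LIMSEQ_iff by (meson half_gt_zero)
    define m where "m = max N m0"
    have Lm: "P n (e (s m) - L) < ep / 2" using m0 fa_nonneg[OF a] by (simp add: m_def)
    have gm: "goodset P e N (dl N) (s m)" using sm by (simp add: m_def)
    show ?thesis using evG[of N]
    proof (rule eventually_mono)
      fix i assume gi: "goodset P e N (dl N) i"
      have "P N (e i - e (s m)) < 2 * dl N" by (rule good_pair[OF a gi gm])
      hence "P n (e i - e (s m)) < ep / 2" using fa_mono[OF a N(1)] N(2) by (meson le_less_trans less_trans)
      thus "P n (e i - L) < ep" using fa_diff_tri[OF a, of n "e i" L "e (s m)"] Lm by linarith
    qed
  qed
  have unit: "L * x = x \<and> x * L = x" for x
  proof -
    have c: "(\<lambda>i::'i. x) \<in> ell_inf P" by (rule const_ell_inf)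
    have small: "P n (x - L * x) < ep \<and> P n (x - x * L) < ep" if ep: "ep > 0" for n ep
    proof -
      have "eventually (\<lambda>i. P n (x - e i * x) < ep/2 \<and> P n (x - x * e i) < ep/2) U"
      proof (rule eventually_conj)
        show "eventually (\<lambda>i. P n (x - e i * x) < ep/2) U"
          using relD[OF a ax[rule_format, OF c, THEN conjunct1], of "ep/2" n] ep by simp
        show "eventually (\<lambda>i. P n (x - x * e i) < ep/2) U"
          using relD[OF a ax[rule_format, OF c, THEN conjunct2], of "ep/2" n] ep by simp
      qed
      moreover have "eventually (\<lambda>i. P n ((e i - L) * x) < ep/2 \<and> P n (x * (e i - L)) < ep/2) U"
        by (rule small_mult[OF a c conv half_gt_zero[OF ep]])
      ultimately have "eventually (\<lambda>i. (P n (x - e i * x) < ep/2 \<and> P n (x - x * e i) < ep/2) \<and>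
          P n ((e i - L) * x) < ep/2 \<and> P n (x * (e i - L)) < ep/2) U"
        by (rule eventually_conj)
      then obtain i where i: "P n (x - e i * x) < ep/2" "P n (x - x * e i) < ep/2"
          "P n ((e i - L) * x) < ep/2" "P n (x * (e i - L)) < ep/2"
        using eventually_happens nb by blast
      have e1: "x - L * x = (x - e i * x) + (e i - L) * x" by (simp add: algebra_simps)
      have e2: "x - x * L = (x - x * e i) + x * (e i - L)" by (simp add: algebra_simps)
      show ?thesis unfolding e1 e2 using i fa_tri[OF a, of n "x - e i * x" "(e i - L) * x"]
        fa_tri[OF a, of n "x - x * e i" "x * (e i - L)"] by linarith
    qed
    have z: "P n (x - L * x) = 0 \<and> P n (x - x * L) = 0" for n
    proof (rule ccontr)
      assume "\<not> (P n (x - L * x) = 0 \<and> P n (x - x * L) = 0)"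
      hence "P n (x - L * x) > 0 \<or> P n (x - x * L) > 0"
        using fa_nonneg[OF a, of n "x - L * x"] fa_nonneg[OF a, of n "x - x * L"] by linarith
      thus False using small[of "P n (x - L * x)" n] small[of "P n (x - x * L)" n] by auto
    qed
    have "x - L * x = 0" by (rule fa_sep[OF a]) (use z in blast)
    moreover have "x - x * L = 0" by (rule fa_sep[OF a]) (use z in blast)
    ultimately show ?thesis by simp
  qed
  show ?thesis
  proof (intro exI[of _ L] allI)
    fix x show "L * x = x \<and> x * L = x" by (rule unit)
  qed
qed

theorem proposition3p1:
  fixes P :: "nat \<Rightarrow> 'a::real_algebra \<Rightarrow> real" and U :: "'i filter"
  assumes "frechet_algebra P"
    and "is_ultrafilter U"
    and "countably_incomplete U"
  shows "ultrapower_unital P U \<longleftrightarrow> algebra_unital TYPE('a)"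
proof
  assume "ultrapower_unital P U"
  then obtain E where E: "E \<in> ultrapower P U"
    and uE: "\<forall>X\<in>ultrapower P U. ultra_mult P U E X = X \<and> ultra_mult P U X E = X"
    unfolding ultrapower_unital_def by blast
  obtain e where Ee: "E = ultra_rel P U `` {e}" and e: "e \<in> ell_inf P"
    using E unfolding ultrapower_def by (rule quotientE)
  have ax: "\<forall>y\<in>ell_inf P. (y, \<lambda>i. e i * y i) \<in> ultra_rel P U \<and> (y, \<lambda>i. y i * e i) \<in> ultra_rel P U"
    using unit_props[OF assms(1) Ee e uE] by blast
  have nb: "U \<noteq> bot" using assms(2) unfolding is_ultrafilter_def by blast
  show "algebra_unital TYPE('a)"
    using unit_from[OF assms(1) nb e ax] unfolding algebra_unital_def by blast
next
  assume "algebra_unital TYPE('a)"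
  then obtain u :: 'a where "\<forall>x. u * x = x \<and> x * u = x" unfolding algebra_unital_def by blast
  thus "ultrapower_unital P U" by (rule unital_imp[OF assms(1)])
qed

end
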